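(* Let $p\in(1,2]$ and let $Y_1,Y_2,\dots$ be i.i.d. real random variables with $\nu_p:=\mathbb{E}|Y_k|^p<\infty$ and mean $y:=\mathbb{E}[Y_k]$. For a constant $c>0$ and $n\ge1$ define $$\hat Y_n:=\frac{c}{n^{1-1/p}}\sum_{k=1}^n\psi_p\!\left(\frac{Y_k}{c\,n^{1/p}}\right).$$ Then for all $\epsilon>0$, $$\mathbb{P}\left(\hat Y_n>y+\epsilon\right)\le\exp\left(-\frac{n^{(p-1)/p}\epsilon}{c}+\frac{b_p\nu_p}{c^p}\right),\qquad \mathbb{P}\left(y>\hat Y_n+\epsilon\right)\le\exp\left(-\frac{n^{(p-1)/p}\epsilon}{c}+\frac{b_p\nu_p}{c^p}\right).$$
   Context: $b_p:=\left[2\left(\frac{2-p}{p-1}\right)^{1-\frac{2}{p}}+\left(\frac{2-p}{p-1}\right)^{2-\frac{2}{p}}\right]^{-p/2}$ (with $0^0=1$ when $p=2$). The influence function is $\psi_p(x):=\ln\left(b_p|x|^p+x+1\right)$ for $x\ge0$ and $\psi_p(x):=-\ln\left(b_p|x|^p-x+1\right)$ for $x<0$. *)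

theory Defs
  imports "HOL-Probability.Probability"
begin

definition rpow0 :: "real \<Rightarrow> real \<Rightarrow> real" where
  "rpow0 x a = (if x = 0 then (if a = 0 then 1 else 0) else x powr a)"

definition b_const :: "real \<Rightarrow> real" where
  "b_const p = (let r = (2 - p) / (p - 1) in
     (2 * rpow0 r (1 - 2 / p) + rpow0 r (2 - 2 / p)) powr (- p / 2))"

definition psi :: "real \<Rightarrow> real \<Rightarrow> real" where
  "psi p x = (if x \<ge> 0 then ln (b_const p * \<bar>x\<bar> powr p + x + 1)
              else - ln (b_const p * \<bar>x\<bar> powr p - x + 1))"

definition catoni_est :: "real \<Rightarrow> real \<Rightarrow> (nat \<Rightarrow> 'a \<Rightarrow> real) \<Rightarrow> nat \<Rightarrow> 'a \<Rightarrow> real" where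
  "catoni_est p c Y n \<omega> =
     c / (real n) powr (1 - 1 / p) * (\<Sum>k=1..n. psi p (Y k \<omega> / (c * (real n) powr (1 / p))))"

end

theory Submission imports Defs begin

lemma b_pos: assumes "1 < p" "p \<le> 2" shows "b_const p > 0"
proof -
  define r where "r = (2 - p) / (p - 1)"
  have r0: "r \<ge> 0" using assms by (simp add: r_def)
  have "2 * rpow0 r (1 - 2 / p) + rpow0 r (2 - 2 / p) > 0"
  proof (cases "r = 0")
    case True
    then have "p = 2" using assms by (simp add: r_def)
    then show ?thesis using True by (simp add: rpow0_def)
  next
    case False
    then show ?thesis using r0 by (simp add: rpow0_def add_pos_nonneg)
  qed
  then show ?thesis unfolding b_const_def Let_def r_def by simp
qed

lemma b_two: "b_const 2 = 1/2"
  by (simp add: b_const_def rpow0_def powr_minus)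

lemma b_log: assumes "1 < p" "p < 2"
  shows "(2/p) * ln (b_const p) = (2*p-2)/p * (ln (p-1) - ln p) + (2-p)/p * (ln (2-p) - ln p)"
proof -
  define r where "r = (2 - p) / (p - 1)"
  define w where "w = (2-p)/p"
  have r0: "r > 0" using assms by (simp add: r_def)
  have e1: "r powr (1 - 2/p) = r powr (-w)"
  proof - have "1 - 2/p = -w" using assms by (simp add: w_def field_simps) then show ?thesis by simp qed
  have e2: "r powr (2 - 2/p) = r powr (-w) * r"
  proof - have "2 - 2/p = -w + 1" using assms by (simp add: w_def field_simps) then have "r powr (2 - 2/p) = r powr (-w + 1)" by (simp only:) then show ?thesis using r0 by (simp add: powr_add powr_diff powr_minus divide_simps) qed
  have base: "2 * rpow0 r (1 - 2 / p) + rpow0 r (2 - 2 / p) = r powr (-w) * (p/(p-1))"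
  proof -
    have h: "2 + r = p/(p-1)" using assms by (simp add: r_def field_simps)
    have "2 * rpow0 r (1 - 2 / p) + rpow0 r (2 - 2 / p) = r powr (-w) * (2 + r)"
      using r0 e1 e2 by (simp add: rpow0_def algebra_simps)
    then show ?thesis using h by simp
  qed
  have bpos: "r powr (-w) * (p/(p-1)) > 0" using r0 assms by simp
  have "ln (b_const p) = (-p/2) * ln (r powr (-w) * (p/(p-1)))"
    unfolding b_const_def Let_def r_def[symmetric] base using bpos by (simp add: ln_powr)
  also have "\<dots> = (-p/2) * (-w * (ln (2-p) - ln (p-1)) + ln p - ln (p-1))"
    using r0 assms by (simp add: ln_mult ln_powr ln_div r_def)
  finally have "(2/p) * ln (b_const p) = -(-w * (ln (2-p) - ln (p-1)) + ln p - ln (p-1))"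
    using assms by (simp add: field_simps)
  then show ?thesis using assms apply (simp add: w_def field_simps)
    apply (drule arg_cong[where f="(*) p"]) by (simp add: algebra_simps)
qed

lemma key_ineq: assumes "1 < p" "p \<le> 2" "t \<ge> 0"
  shows "t^2 \<le> 2 * (b_const p * t powr p) + (b_const p * t powr p)^2"
proof (cases "t = 0")
  case True then show ?thesis by simp
next
  case False
  then have t0: "t > 0" using assms by simp
  show ?thesis
  proof (cases "p = 2")
    case True
    then show ?thesis using t0 by (simp add: b_two)
  next
    case False
    then have p2: "p < 2" using assms by simp
    define b where "b = b_const p"
    have b0: "b > 0" using b_pos assms b_def by simp
    define w1 where "w1 = (2*p-2)/p"
    define w2 where "w2 = (2-p)/p"
    have w1p: "w1 > 0" and w2p: "w2 > 0" and w12: "w1 = 1 - w2"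
      using assms p2 by (auto simp: w1_def w2_def field_simps)
    define L where "L = ln t"
    define \<beta> where "\<beta> = ln b"
    define A where "A = \<beta> + (p-2)*L + ln 2 - ln w1"
    define B where "B = 2*\<beta> + (2*p-2)*L - ln w2"
    have lg: "(2/p) * \<beta> = w1 * (ln (p-1) - ln p) + w2 * (ln (2-p) - ln p)"
      using b_log[OF assms(1) p2] by (simp add: \<beta>_def b_def w1_def w2_def)
    have lw1: "ln w1 = ln 2 + ln (p-1) - ln p" proof -
      have "ln (2*p-2) = ln (2*(p-1))" by (simp add: algebra_simps)
      also have "\<dots> = ln 2 + ln (p-1)" by (rule ln_mult_pos) (use assms in auto)
      finally have X: "ln (2*p-2) = ln 2 + ln (p-1)" .
      have "ln w1 = ln (2*p-2) - ln p" unfolding w1_def using assms by (intro ln_divide_pos) auto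
      then show ?thesis using X by linarith
    qed
    have lw2: "ln w2 = ln (2-p) - ln p" using assms p2 by (simp add: w2_def ln_div)
    have coefL: "w1 * (p-2) + w2 * (2*p-2) = 0" using assms by (simp add: w1_def w2_def field_simps)
    have coefb: "w1 + 2 * w2 = 2/p" using assms by (simp add: w1_def w2_def field_simps)
    have "w1 * A + w2 * B = (w1 + 2*w2) * \<beta> + (w1 * (p-2) + w2 * (2*p-2)) * L
          + w1 * (ln 2 - ln w1) - w2 * ln w2"
      by (simp add: A_def B_def algebra_simps)
    also have "\<dots> = 0" unfolding coefL coefb lg lw1 lw2 by (simp add: algebra_simps)
    finally have z: "(1 - w2) * A + w2 * B = 0" using w12 by simp
    have "exp ((1 - w2) *\<^sub>R A + w2 *\<^sub>R B) \<le> (1 - w2) * exp A + w2 * exp B"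
      using convex_onD[OF exp_convex, of w2 A B] w2p w12 w1p by simp
    then have c1: "1 \<le> w1 * exp A + w2 * exp B" using z w12 by simp
    have eA: "w1 * exp A = 2 * b * t powr (p-2)"
      using w1p b0 t0 by (simp add: A_def exp_add exp_diff \<beta>_def L_def powr_def)
    have e2b: "exp (2 * ln b) = b^2" using exp_of_nat_mult[of 2 "ln b"] b0 by simp
    have eB: "w2 * exp B = b^2 * t powr (2*p-2)"
      using w2p b0 t0 e2b by (simp add: B_def exp_add exp_diff \<beta>_def L_def powr_def)
    have "t^2 = t^2 * 1" by simp
    also have "\<dots> \<le> t^2 * (2 * b * t powr (p-2) + b^2 * t powr (2*p-2))"
      using c1 eA eB by (intro mult_left_mono) auto
    also have "\<dots> = 2 * (b * t powr p) + (b * t powr p)^2"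
    proof -
      have t2: "t^2 = t powr 2" using t0 by (simp add: powr_numeral)
      have "t^2 * t powr (p-2) = t powr (2 + (p-2))" unfolding t2 powr_add by simp
      then have "t^2 * t powr (p-2) = t powr p" by simp
      moreover have "t^2 * t powr (2*p-2) = t powr (2 + (2*p-2))" unfolding t2 powr_add by simp
      moreover have "(t powr p)^2 = t powr (p + p)" unfolding powr_add by (simp add: power2_eq_square)
      moreover have "2 + (2*p-2) = p + p" by simp
      ultimately show ?thesis by (simp add: algebra_simps power_mult_distrib)
    qed
    finally show ?thesis by (simp add: b_def)
  qed
qed

lemma exp_psi_le: assumes "1 < p" "p \<le> 2"
  shows "exp (psi p x) \<le> 1 + x + b_const p * \<bar>x\<bar> powr p"
proof -
  define b where "b = b_const p"
  have b0: "b > 0" using b_pos assms b_def by simp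
  show ?thesis
  proof (cases "x \<ge> 0")
    case True
    have "b * \<bar>x\<bar> powr p + x + 1 > 0" using True b0 by (simp add: add_nonneg_pos)
    then show ?thesis using True by (simp add: psi_def b_def[symmetric] algebra_simps)
  next
    case False
    define t where "t = \<bar>x\<bar>"
    define v where "v = b * t powr p"
    have t0: "t \<ge> 0" and xt: "x = -t" using False by (auto simp: t_def)
    have v0: "v \<ge> 0" using b0 by (simp add: v_def)
    have K: "t^2 \<le> 2 * v + v ^ 2" using key_ineq[OF assms t0] by (simp add: v_def b_def)
    have u0: "v + t + 1 > 0" using v0 t0 by simp
    have "psi p x = - ln (v + t + 1)" using False by (simp add: psi_def v_def t_def b_def)
    then have "exp (psi p x) = 1 / (v + t + 1)" using u0 by (simp add: exp_minus inverse_eq_divide)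
    also have "\<dots> \<le> 1 - t + v"
    proof -
      have "1 \<le> (1 - t + v) * (v + t + 1)" using K by (simp add: algebra_simps power2_eq_square)
      then show ?thesis using u0 by (simp add: divide_simps)
    qed
    finally have "exp (psi p x) \<le> 1 - t + v" .
    moreover have "1 - t + v = 1 + x + b_const p * \<bar>x\<bar> powr p" using xt by (simp add: v_def t_def b_def)
    ultimately show ?thesis by simp
  qed
qed

lemma psi_odd: "psi p (-x) = - psi p x"
  by (cases "x > 0") (auto simp: psi_def)

lemma psi_meas[measurable]: "psi p \<in> borel_measurable borel"
proof -
  have "(\<lambda>x. ln (b_const p * \<bar>x\<bar> powr p + x + 1)) \<in> borel_measurable borel" by measurable
  moreover have "(\<lambda>x. - ln (b_const p * \<bar>x\<bar> powr p - x + 1)) \<in> borel_measurable borel" by measurable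
  moreover have "{x::real \<in> space borel. 0 \<le> x} \<in> sets borel" by measurable
  ultimately show ?thesis unfolding psi_def by (rule measurable_If)
qed

lemma abs_le_powr: assumes "1 \<le> p" shows "\<bar>y::real\<bar> \<le> 1 + \<bar>y\<bar> powr p"
proof (cases "\<bar>y\<bar> \<le> 1")
  case True then show ?thesis by (simp add: add_increasing2)
next
  case False
  then have "\<bar>y\<bar> powr 1 \<le> \<bar>y\<bar> powr p" using assms by (intro powr_mono) auto
  then show ?thesis using False by simp
qed

lemma upper_tail:
  fixes M :: "'a measure" and Y :: "nat \<Rightarrow> 'a \<Rightarrow> real"
    and p c \<epsilon> :: real and n :: nat
  assumes P: "prob_space M"
    and p: "1 < p" "p \<le> 2"
    and rv: "\<And>k. k \<ge> 1 \<Longrightarrow> Y k \<in> borel_measurable M"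
    and indep: "prob_space.indep_vars M (\<lambda>_. borel) Y {1..}"
    and ident: "\<And>k. k \<ge> 1 \<Longrightarrow> distr M borel (Y k) = distr M borel (Y 1)"
    and moment: "integrable M (\<lambda>\<omega>. \<bar>Y 1 \<omega>\<bar> powr p)"
    and c: "c > 0" and n: "n \<ge> 1"
  shows "measure M {\<omega> \<in> space M. catoni_est p c Y n \<omega> > (\<integral>\<omega>. Y 1 \<omega> \<partial>M) + \<epsilon>}
           \<le> exp (- ((real n powr ((p - 1) / p)) * \<epsilon> / c)
                 + b_const p * (\<integral>\<omega>. \<bar>Y 1 \<omega>\<bar> powr p \<partial>M) / c powr p)"
proof -
  interpret prob_space M by (rule P)
  define m where "m = (\<integral>\<omega>. Y 1 \<omega> \<partial>M)"
  define \<nu> where "\<nu> = (\<integral>\<omega>. \<bar>Y 1 \<omega>\<bar> powr p \<partial>M)"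
  define b where "b = b_const p"
  define a where "a = c * real n powr (1/p)"
  have b0: "b > 0" using b_pos p b_def by simp
  have n0: "real n > 0" using n by simp
  have a0: "a > 0" using c n0 by (simp add: a_def)
  define Z where "Z k \<omega> = exp (psi p (Y k \<omega> / a))" for k \<omega>
  have fp[measurable]: "(\<lambda>y::real. \<bar>y\<bar> powr p) \<in> borel_measurable borel" by measurable
  have intp: "integrable M (\<lambda>\<omega>. \<bar>Y k \<omega>\<bar> powr p) \<and> (\<integral>\<omega>. \<bar>Y k \<omega>\<bar> powr p \<partial>M) = \<nu>" if k: "k \<ge> 1" for k
  proof -
    have r1: "Y 1 \<in> borel_measurable M" using rv by simp
    have "integrable M (\<lambda>\<omega>. \<bar>Y k \<omega>\<bar> powr p) \<longleftrightarrow> integrable (distr M borel (Y k)) (\<lambda>y. \<bar>y\<bar> powr p)"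
      using integrable_distr_eq[OF rv[OF k] fp] by simp
    also have "\<dots> \<longleftrightarrow> integrable (distr M borel (Y 1)) (\<lambda>y. \<bar>y\<bar> powr p)" using ident[OF k] by simp
    also have "\<dots> \<longleftrightarrow> integrable M (\<lambda>\<omega>. \<bar>Y 1 \<omega>\<bar> powr p)" using integrable_distr_eq[OF r1 fp] by simp
    finally have i: "integrable M (\<lambda>\<omega>. \<bar>Y k \<omega>\<bar> powr p)" using moment by simp
    have "(\<integral>\<omega>. \<bar>Y k \<omega>\<bar> powr p \<partial>M) = integral\<^sup>L (distr M borel (Y k)) (\<lambda>y. \<bar>y\<bar> powr p)"
      using integral_distr[OF rv[OF k] fp] by simp
    also have "\<dots> = integral\<^sup>L (distr M borel (Y 1)) (\<lambda>y. \<bar>y\<bar> powr p)" using ident[OF k] by simp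
    also have "\<dots> = \<nu>" using integral_distr[OF r1 fp] by (simp add: \<nu>_def)
    finally show ?thesis using i by simp
  qed
  have int1: "integrable M (Y k) \<and> (\<integral>\<omega>. Y k \<omega> \<partial>M) = m" if k: "k \<ge> 1" for k
  proof -
    have r1: "Y 1 \<in> borel_measurable M" using rv by simp
    have fid: "(\<lambda>y::real. y) \<in> borel_measurable borel" by simp
    have "integrable M (\<lambda>\<omega>. 1 + \<bar>Y k \<omega>\<bar> powr p)" using intp[OF k] by simp
    then have i: "integrable M (Y k)"
      by (rule Bochner_Integration.integrable_bound) (use rv[OF k] abs_le_powr p in auto)
    have "(\<integral>\<omega>. Y k \<omega> \<partial>M) = integral\<^sup>L (distr M borel (Y k)) (\<lambda>y. y)"
      using integral_distr[OF rv[OF k] fid] by simp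
    also have "\<dots> = integral\<^sup>L (distr M borel (Y 1)) (\<lambda>y. y)" using ident[OF k] by simp
    also have "\<dots> = m" using integral_distr[OF r1 fid] by (simp add: m_def)
    finally show ?thesis using i by simp
  qed
  define q where "q = 1 + m/a + b*\<nu>/a powr p"
  have Zmeas: "Z k \<in> borel_measurable M" if k: "k \<ge> 1" for k
    using rv[OF k] unfolding Z_def by measurable
  have Zint: "integrable M (Z k) \<and> (\<integral>\<omega>. Z k \<omega> \<partial>M) \<le> q \<and> 0 \<le> (\<integral>\<omega>. Z k \<omega> \<partial>M)" if k: "k \<ge> 1" for k
  proof -
    define h where "h \<omega> = 1 + Y k \<omega> / a + b * (\<bar>Y k \<omega>\<bar> powr p / a powr p)" for \<omega>
    have hb: "Z k \<omega> \<le> h \<omega>" for \<omega>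
    proof -
      have "Z k \<omega> \<le> 1 + Y k \<omega> / a + b * \<bar>Y k \<omega> / a\<bar> powr p"
        unfolding Z_def b_def by (rule exp_psi_le[OF p])
      also have "\<bar>Y k \<omega> / a\<bar> powr p = \<bar>Y k \<omega>\<bar> powr p / a powr p"
        using a0 by (simp add: powr_divide)
      finally show ?thesis by (simp add: h_def)
    qed
    have hi: "integrable M h" unfolding h_def using int1[OF k] intp[OF k] by simp
    have hint: "(\<integral>\<omega>. h \<omega> \<partial>M) = q"
      unfolding h_def q_def using int1[OF k] intp[OF k] by (simp add: Bochner_Integration.integral_add prob_space)
    have zi: "integrable M (Z k)"
      by (rule Bochner_Integration.integrable_bound[OF hi Zmeas[OF k]])
         (use hb in \<open>auto simp: Z_def intro!: AE_I2 order_trans[OF _ abs_ge_self]\<close>)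
    have "(\<integral>\<omega>. Z k \<omega> \<partial>M) \<le> (\<integral>\<omega>. h \<omega> \<partial>M)"
      by (rule integral_mono[OF zi hi hb])
    moreover have "0 \<le> (\<integral>\<omega>. Z k \<omega> \<partial>M)" by (rule Bochner_Integration.integral_nonneg) (simp add: Z_def)
    ultimately show ?thesis using zi hint by simp
  qed
  have ind: "indep_vars (\<lambda>_. borel) Z {1..n}"
  proof -
    have "indep_vars (\<lambda>_. borel) Y {1..n}" using indep_vars_subset[OF indep, of "{1..n}"] by auto
    then have "indep_vars (\<lambda>_. borel) (\<lambda>k \<omega>. (\<lambda>y. exp (psi p (y / a))) (Y k \<omega>)) {1..n}"
      by (rule indep_vars_compose2) measurable
    moreover have "Z = (\<lambda>k \<omega>. (\<lambda>y. exp (psi p (y / a))) (Y k \<omega>))" by (simp add: fun_eq_iff Z_def)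
    ultimately show ?thesis by simp
  qed
  have prodE: "(\<integral>\<omega>. (\<Prod>k\<in>{1..n}. Z k \<omega>) \<partial>M) = (\<Prod>k\<in>{1..n}. \<integral>\<omega>. Z k \<omega> \<partial>M)"
    and prodI: "integrable M (\<lambda>\<omega>. (\<Prod>k\<in>{1..n}. Z k \<omega>))"
    using indep_vars_lebesgue_integral[OF _ ind] indep_vars_integrable[OF _ ind] Zint by auto
  have q0: "0 \<le> q" using Zint[of 1] by auto
  have "(\<Prod>k\<in>{1..n}. \<integral>\<omega>. Z k \<omega> \<partial>M) \<le> (\<Prod>k\<in>{1..n}. q)"
    by (rule prod_mono) (use Zint in auto)
  also have "\<dots> = q ^ n" by simp
  also have "\<dots> \<le> exp (m/a + b*\<nu>/a powr p) ^ n"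
    by (rule power_mono) (use q0 exp_ge_add_one_self[of "m/a + b*\<nu>/a powr p"] in \<open>auto simp: q_def add.assoc simp del: exp_ge_add_one_self\<close>)
  also have "\<dots> = exp (real n * (m/a + b*\<nu>/a powr p))" by (simp add: exp_of_nat_mult)
  finally have EP: "(\<integral>\<omega>. (\<Prod>k\<in>{1..n}. Z k \<omega>) \<partial>M) \<le> exp (real n * (m/a + b*\<nu>/a powr p))"
    using prodE by simp
  define n' where "n' = real n powr (1 - 1/p)"
  have n'0: "n' > 0" using n0 by (simp add: n'_def)
  define T where "T = (m + \<epsilon>) * n' / c"
  have [measurable]: "(\<lambda>\<omega>. (\<Prod>k\<in>{1..n}. Z k \<omega>)) \<in> borel_measurable M"
    using prodI by (rule borel_measurable_integrable)
  have sub: "{\<omega> \<in> space M. catoni_est p c Y n \<omega> > m + \<epsilon>} \<subseteq> {\<omega> \<in> space M. (\<Prod>k\<in>{1..n}. Z k \<omega>) \<ge> exp T}"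
  proof safe
    fix \<omega> assume \<omega>: "\<omega> \<in> space M" and gt: "catoni_est p c Y n \<omega> > m + \<epsilon>"
    define S where "S = (\<Sum>k=1..n. psi p (Y k \<omega> / a))"
    have cat: "catoni_est p c Y n \<omega> = c / n' * S" by (simp add: catoni_est_def S_def a_def n'_def)
    have "T < S" using gt c n'0 unfolding cat T_def by (simp add: field_simps)
    then have "exp T \<le> exp S" by simp
    also have "exp S = (\<Prod>k\<in>{1..n}. Z k \<omega>)" by (simp add: S_def exp_sum Z_def)
    finally show "exp T \<le> (\<Prod>k\<in>{1..n}. Z k \<omega>)" .
  qed
  have "measure M {\<omega> \<in> space M. catoni_est p c Y n \<omega> > m + \<epsilon>}
       \<le> measure M {\<omega> \<in> space M. (\<Prod>k\<in>{1..n}. Z k \<omega>) \<ge> exp T}"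
    by (rule finite_measure_mono[OF sub]) measurable
  also have "\<dots> \<le> (\<integral>\<omega>. (\<Prod>k\<in>{1..n}. Z k \<omega>) \<partial>M) / exp T"
    by (rule integral_Markov_inequality_measure[OF prodI, of "space M"]) (auto simp: Z_def intro!: prod_nonneg)
  also have "\<dots> \<le> exp (real n * (m/a + b*\<nu>/a powr p)) / exp T"
    by (rule divide_right_mono[OF EP]) simp
  also have "\<dots> = exp (real n * (m/a + b*\<nu>/a powr p) - T)" by (simp add: exp_diff)
  also have "real n * (m/a + b*\<nu>/a powr p) - T = - (n' * \<epsilon> / c) + b * \<nu> / c powr p"
  proof -
    define N where "N = real n powr (1/p)"
    have N0: "N > 0" using n0 by (simp add: N_def)
    have nN: "real n = N * n'"
      unfolding N_def n'_def using n0 by (simp add: powr_add[symmetric])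
    have aP: "a powr p = c powr p * real n"
      unfolding a_def using c n0 p by (simp add: powr_mult powr_powr)
    have "real n * (m/a) = m * n' / c" unfolding a_def nN[symmetric] using N0 c
      by (subst nN) (simp add: N_def[symmetric] field_simps)
    moreover have "real n * (b*\<nu>/a powr p) = b * \<nu> / c powr p" unfolding aP using n0 c by (simp add: field_simps)
    ultimately show ?thesis unfolding T_def by (simp add: algebra_simps add_divide_distrib)
  qed
  finally show ?thesis
    unfolding m_def[symmetric] \<nu>_def[symmetric] b_def[symmetric]
    using p by (simp add: n'_def diff_divide_distrib)
qed

theorem theorem2:
  fixes M :: "'a measure" and Y :: "nat \<Rightarrow> 'a \<Rightarrow> real"
    and p c \<epsilon> :: real and n :: nat
  assumes "prob_space M"
    and "1 < p" "p \<le> 2"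
    and rv: "\<And>k. k \<ge> 1 \<Longrightarrow> Y k \<in> borel_measurable M"
    and indep: "prob_space.indep_vars M (\<lambda>_. borel) Y {1..}"
    and ident: "\<And>k. k \<ge> 1 \<Longrightarrow> distr M borel (Y k) = distr M borel (Y 1)"
    and moment: "integrable M (\<lambda>\<omega>. \<bar>Y 1 \<omega>\<bar> powr p)"
    and "c > 0" and "n \<ge> 1" and "\<epsilon> > 0"
  shows "measure M {\<omega> \<in> space M. catoni_est p c Y n \<omega> > (\<integral>\<omega>. Y 1 \<omega> \<partial>M) + \<epsilon>}
           \<le> exp (- ((real n powr ((p - 1) / p)) * \<epsilon> / c)
                 + b_const p * (\<integral>\<omega>. \<bar>Y 1 \<omega>\<bar> powr p \<partial>M) / c powr p)
      \<and> measure M {\<omega> \<in> space M. (\<integral>\<omega>. Y 1 \<omega> \<partial>M) > catoni_est p c Y n \<omega> + \<epsilon>}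
           \<le> exp (- ((real n powr ((p - 1) / p)) * \<epsilon> / c)
                 + b_const p * (\<integral>\<omega>. \<bar>Y 1 \<omega>\<bar> powr p \<partial>M) / c powr p)"
proof
  show "measure M {\<omega> \<in> space M. catoni_est p c Y n \<omega> > (\<integral>\<omega>. Y 1 \<omega> \<partial>M) + \<epsilon>}
           \<le> exp (- ((real n powr ((p - 1) / p)) * \<epsilon> / c)
                 + b_const p * (\<integral>\<omega>. \<bar>Y 1 \<omega>\<bar> powr p \<partial>M) / c powr p)"
    by (rule upper_tail[OF assms(1-3) rv indep ident moment]) (use assms in simp_all)
next
  interpret prob_space M by fact
  define Y' where "Y' k \<omega> = - Y k \<omega>" for k \<omega>
  have Y'f: "Y' k = (\<lambda>x. - Y k x)" for k by (simp add: fun_eq_iff Y'_def)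
  have rv': "Y' k \<in> borel_measurable M" if "k \<ge> 1" for k
    using rv[OF that] unfolding Y'_def by measurable
  have ind': "indep_vars (\<lambda>_. borel) Y' {1..}"
  proof -
    have "indep_vars (\<lambda>_. borel) (\<lambda>k \<omega>. (\<lambda>y::real. - y) (Y k \<omega>)) {1..}"
      using indep by (rule indep_vars_compose2) measurable
    moreover have "Y' = (\<lambda>k \<omega>. (\<lambda>y::real. - y) (Y k \<omega>))" by (simp add: fun_eq_iff Y'_def)
    ultimately show ?thesis by simp
  qed
  have ident': "distr M borel (Y' k) = distr M borel (Y' 1)" if k: "k \<ge> 1" for k
  proof -
    have um: "(uminus :: real \<Rightarrow> real) \<in> borel_measurable borel" by simp
    have "distr M borel (Y' k) = distr (distr M borel (Y k)) borel uminus"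
      using distr_distr[OF um rv[OF k]] by (simp add: Y'f comp_def)
    also have "\<dots> = distr (distr M borel (Y 1)) borel uminus" using ident[OF k] by simp
    also have "\<dots> = distr M borel (Y' 1)"
      using distr_distr[OF um rv[of 1]] by (simp add: Y'f comp_def)
    finally show ?thesis .
  qed
  have mom': "integrable M (\<lambda>\<omega>. \<bar>Y' 1 \<omega>\<bar> powr p)" using moment by (simp add: Y'_def)
  have U: "measure M {\<omega> \<in> space M. catoni_est p c Y' n \<omega> > (\<integral>\<omega>. Y' 1 \<omega> \<partial>M) + \<epsilon>}
           \<le> exp (- ((real n powr ((p - 1) / p)) * \<epsilon> / c)
                 + b_const p * (\<integral>\<omega>. \<bar>Y' 1 \<omega>\<bar> powr p \<partial>M) / c powr p)"
    by (rule upper_tail[OF assms(1-3) rv' ind' ident' mom']) (use assms in simp_all)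
  have cat: "catoni_est p c Y' n \<omega> = - catoni_est p c Y n \<omega>" for \<omega>
  proof -
    have "psi p (Y' k \<omega> / (c * real n powr (1 / p))) = - psi p (Y k \<omega> / (c * real n powr (1 / p)))" for k
      using psi_odd[of p "Y k \<omega> / (c * real n powr (1 / p))"] by (simp add: Y'_def)
    then show ?thesis unfolding catoni_est_def by (simp add: sum_negf)
  qed
  have "{\<omega> \<in> space M. catoni_est p c Y' n \<omega> > (\<integral>\<omega>. Y' 1 \<omega> \<partial>M) + \<epsilon>}
      = {\<omega> \<in> space M. (\<integral>\<omega>. Y 1 \<omega> \<partial>M) > catoni_est p c Y n \<omega> + \<epsilon>}"
  proof -
    have "(\<integral>\<omega>. Y' 1 \<omega> \<partial>M) = - (\<integral>\<omega>. Y 1 \<omega> \<partial>M)" by (simp add: Y'f)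
    then show ?thesis unfolding cat by auto
  qed
  moreover have "(\<integral>\<omega>. \<bar>Y' 1 \<omega>\<bar> powr p \<partial>M) = (\<integral>\<omega>. \<bar>Y 1 \<omega>\<bar> powr p \<partial>M)" by (simp add: Y'_def)
  ultimately show "measure M {\<omega> \<in> space M. (\<integral>\<omega>. Y 1 \<omega> \<partial>M) > catoni_est p c Y n \<omega> + \<epsilon>}
           \<le> exp (- ((real n powr ((p - 1) / p)) * \<epsilon> / c)
                 + b_const p * (\<integral>\<omega>. \<bar>Y 1 \<omega>\<bar> powr p \<partial>M) / c powr p)"
    using U by simp
qed

end
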